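(* Consider a parameter-dependent flow on the strip $[x_-,x_+]\times\mathbb R$ satisfying all the standing assumptions in the context, including the monotonicity assumption (M). Fix a solution $x(\tau)$ of $\dot x=f(x)$ with values in $(x_-,x_+)$, and for $\mu\in I$ write the distinguished orbits as $\widetilde{\mathcal W}^\pm_\mu=\{(x(\tau),y^\pm_\mu(\tau)):\tau\in\mathbb R\}$. Then $y^\pm_\mu$ are monotone in $\mu$: if $\mu_1<\mu_2$ then $y^-_{\mu_1}(\tau)\ge y^-_{\mu_2}(\tau)$ and $y^+_{\mu_1}(\tau)\le y^+_{\mu_2}(\tau)$ for all $\tau\in\mathbb R$.
   Context: Let $x_-<x_+$ and consider on the strip $[x_-,x_+]\times\mathbb R$ (universal cover of the cylinder $[x_-,x_+]\times\mathbb S^1$, $\mathbb S^1=\mathbb R/2\pi\mathbb Z$) the family of systems $\dot x=f(x)$, $\dot y=g_\mu(x,y)$, with parameter $\mu$ in an open interval $I\subset\mathbb R$; $f$ is smooth, $g_\mu(x,y)$ is smooth in $(x,y)$, $C^1$ in $\mu$, and $2\pi$-periodic in $y$. Assume $f(x_\pm)=0$, $f>0$ on $(x_-,x_+)$, $f'(x_-)\ge0$, $f'(x_+)\le0$. For each $\mu$ assume: $g_\mu(x_-,y)=0$ iff $y\equiv s_-$ or $y\equiv n_-$ mod $2\pi$, and $g_\mu(x_+,y)=0$ iff $y\equiv s_+$ or $y\equiv n_+$ mod $2\pi$, where $-\pi\le s_-<n_-\le\pi$, $-\pi\le s_+<n_+\le\pi$ (depending on $\mu$); $\partial_yg_\mu(x_-,n_-)>0$,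 $\partial_yg_\mu(x_-,s_-)<0$, $\partial_yg_\mu(x_+,n_+)<0$, $\partial_yg_\mu(x_+,s_+)>0$; $s_--n_-\equiv n_+-s_+$ mod $2\pi$; and the flow has no non-wandering points other than these boundary equilibria and their $2\pi$-translates. Monotonicity assumption (M): $\partial_\mu g_\mu(x,y)\le0$ for all $(x,y)$ and $\mu$. Let $\tilde S_-=(x_-,s_-)$ and $\tilde S_+=(x_+,s_+)$. The distinguished orbit $\widetilde{\mathcal W}^-_\mu$ is the unique orbit in the open strip whose $\alpha$-limit is $\tilde S_-$, and $\widetilde{\mathcal W}^+_\mu$ the unique orbit whose $\omega$-limit is $\tilde S_+$. *)

theory Defs
  imports "HOL-Analysis.Analysis"
begin

definition C1_on :: "'a::real_normed_vector set \<Rightarrow> ('a \<Rightarrow> 'b::real_normed_vector) \<Rightarrow> bool" where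
  "C1_on S h \<longleftrightarrow> (\<exists>D :: 'a \<Rightarrow> ('a \<Rightarrow>\<^sub>L 'b).
        (\<forall>p\<in>S. (h has_derivative blinfun_apply (D p)) (at p)) \<and> continuous_on S D)"

text \<open>C-infinity (smooth) on an open set: there is a family of iterated derivatives
  D vs p (the derivative of order length vs at p, applied to the directions vs) such that
  each q \<mapsto> D vs q is Frechet differentiable with derivative v \<mapsto> D (v # vs) p.
  (In finite dimensions this is equivalent to the usual notion of C-infinity.)\<close>
definition smooth_on :: "'a::real_normed_vector set \<Rightarrow> ('a \<Rightarrow> 'b::real_normed_vector) \<Rightarrow> bool" where
  "smooth_on S h \<longleftrightarrow> (\<exists>D :: 'a list \<Rightarrow> 'a \<Rightarrow> 'b.
        (\<forall>p\<in>S. D [] p = h p) \<and>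
        (\<forall>vs. \<forall>p\<in>S. ((\<lambda>q. D vs q) has_derivative (\<lambda>v. D (v # vs) p)) (at p)))"

definition alpha_limit :: "(real \<Rightarrow> 'a::topological_space) \<Rightarrow> 'a set" where
  "alpha_limit z = {p. \<exists>t::nat \<Rightarrow> real. filterlim t at_bot sequentially \<and> ((\<lambda>n. z (t n)) \<longlonglongrightarrow> p)}"

definition omega_limit :: "(real \<Rightarrow> 'a::topological_space) \<Rightarrow> 'a set" where
  "omega_limit z = {p. \<exists>t::nat \<Rightarrow> real. filterlim t at_top sequentially \<and> ((\<lambda>n. z (t n)) \<longlonglongrightarrow> p)}"

definition nonwandering :: "('a::real_normed_vector \<Rightarrow> 'a) \<Rightarrow> 'a set \<Rightarrow> 'a \<Rightarrow> bool" where
  "nonwandering V S p \<longleftrightarrow> p \<in> S \<and>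
     (\<forall>U. open U \<longrightarrow> p \<in> U \<longrightarrow>
        (\<forall>T. \<exists>t\<ge>T. \<exists>z :: real \<Rightarrow> 'a.
            (\<forall>s\<in>{0..t}. z s \<in> S \<and> (z has_vector_derivative V (z s)) (at s within {0..t}))
            \<and> z 0 \<in> U \<and> z t \<in> U))"

end

theory Submission
  imports Defs
begin


lemma zero_arith:
  fixes a b z :: real and k :: int
  assumes "-pi \<le> a" "a < b" "b \<le> pi" "-pi \<le> z" "z < a"
    and "z = a + 2*pi*k \<or> z = b + 2*pi*k"
  shows "z = b - 2*pi"
proof -
  have pi: "pi > 0" by (rule pi_gt_zero)
  show ?thesis
  proof (cases "z = a + 2*pi*k")
    case True
    show ?thesis
    proof (cases "k \<ge> 0")
      case True then have "2*pi*k \<ge> 0" using pi by simp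
      then show ?thesis using \<open>z = a + 2*pi*k\<close> assms by linarith
    next
      case False then have "real_of_int k \<le> -1" by linarith
      then have "pi*k \<le> pi*(-1)" using pi by (intro mult_left_mono) auto
      then have "2*pi*k \<le> -2*pi" by simp
      then show ?thesis using \<open>z = a + 2*pi*k\<close> assms by linarith
    qed
  next
    case False
    then have z: "z = b + 2*pi*k" using assms by blast
    consider "k \<ge> 0" | "k = -1" | "k \<le> -2" by linarith
    then show ?thesis
    proof cases
      case 1 then have "2*pi*k \<ge> 0" using pi by simp
      then show ?thesis using z assms by linarith
    next
      case 2 then show ?thesis using z by simp
    next
      case 3 then have "real_of_int k \<le> -2" by linarith
      then have "pi*k \<le> pi*(-2)" using pi by (intro mult_left_mono) auto
      then have "2*pi*k \<le> -4*pi" by simp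
      then show ?thesis using z assms by linarith
    qed
  qed
qed

lemma zero_order:
  fixes \<phi> \<psi> :: "real \<Rightarrow> real" and a b s da db ds :: real
  assumes le: "\<And>y. \<phi> y \<le> \<psi> y"
    and per: "\<And>y. \<phi> (y + 2*pi) = \<phi> y"
    and zeros: "\<And>y. \<phi> y = 0 \<longleftrightarrow> (\<exists>k::int. y = a + 2*pi*k) \<or> (\<exists>k::int. y = b + 2*pi*k)"
    and ord: "-pi \<le> a" "a < b" "b \<le> pi"
    and da: "DERIV \<phi> a :> da" "da < 0"
    and db: "DERIV \<phi> b :> db" "db > 0"
    and cont: "\<And>y. isCont \<phi> y"
    and s: "\<psi> s = 0" "DERIV \<psi> s :> ds" "ds < 0" "-pi \<le> s"
  shows "a \<le> s"
proof (rule ccontr)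
  assume "\<not> a \<le> s" then have sa: "s < a" by simp
  have pa: "\<phi> a = 0" using zeros[of a] by (auto intro: exI[of _ 0])
  obtain d where d: "d > 0" "\<And>h. h > 0 \<Longrightarrow> h < d \<Longrightarrow> \<phi> a < \<phi> (a - h)"
    using DERIV_neg_dec_left[OF da] by blast
  define y0 where "y0 = a - min d (a - s) / 2"
  have m: "min d (a-s) / 2 > 0" "min d (a-s)/2 < d" "min d (a-s)/2 < a - s" using d sa by auto
  have y0: "s < y0" "y0 < a" "\<phi> y0 > 0" unfolding y0_def using d(2)[OF m(1) m(2)] m pa by auto
  have ps: "\<phi> s \<le> 0" using le[of s] s by simp
  show False
  proof (cases "\<phi> s < 0")
    case True
    obtain z where z: "s \<le> z" "z \<le> y0" "\<phi> z = 0"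
      using IVT[of \<phi> s 0 y0] True y0 cont by force
    have "z \<noteq> s" using True z by auto
    then have "-pi < z" using z s by auto
    from z(3) obtain k :: int where "z = a + 2*pi*k \<or> z = b + 2*pi*k" using zeros by blast
    then have "z = b - 2*pi" using zero_arith[of a b z k] ord z y0 s by linarith
    then show False using \<open>-pi < z\<close> ord by linarith
  next
    case False
    then have ps0: "\<phi> s = 0" using ps by simp
    from ps0 obtain k :: int where "s = a + 2*pi*k \<or> s = b + 2*pi*k" using zeros by blast
    then have sb: "s = b - 2*pi" using zero_arith[of a b s k] ord sa s by linarith
    have "DERIV (\<lambda>y. \<phi> (y + 2*pi)) s :> db"
      using DERIV_shift[of \<phi> db s "2*pi"] db sb by simp
    then have ds2: "DERIV \<phi> s :> db" using per by simp
    obtain d1 where d1: "d1 > 0" "\<And>h. h > 0 \<Longrightarrow> h < d1 \<Longrightarrow> \<phi> s < \<phi> (s + h)"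
      using DERIV_pos_inc_right[OF ds2 db(2)] by blast
    obtain d2 where d2: "d2 > 0" "\<And>h. h > 0 \<Longrightarrow> h < d2 \<Longrightarrow> \<psi> s > \<psi> (s + h)"
      using DERIV_neg_dec_right[OF s(2) s(3)] by blast
    define h where "h = min d1 d2 / 2"
    have "\<phi> (s + h) > 0" "\<psi> (s+h) < 0" using d1 d2 ps0 s(1) unfolding h_def by auto
    then show False using le[of "s+h"] by simp
  qed
qed




lemma gronwall_back:
  fixes w w' :: "real \<Rightarrow> real" and a b L :: real
  assumes ab: "a \<le> b"
    and der: "\<And>t. a \<le> t \<Longrightarrow> t \<le> b \<Longrightarrow> (w has_real_derivative w' t) (at t)"
    and ineq: "\<And>t. a \<le> t \<Longrightarrow> t \<le> b \<Longrightarrow> 0 \<le> w t \<Longrightarrow> w' t \<le> L * w t"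
    and wb: "0 < w b"
  shows "0 < w a"
proof (rule ccontr)
  assume "\<not> 0 < w a" then have wa: "w a \<le> 0" by simp
  have cont: "continuous_on {a..b} w"
    by (intro continuous_at_imp_continuous_on ballI) (meson DERIV_isCont atLeastAtMost_iff der)
  define S where "S = {a..b} \<inter> w -` {..0}"
  have cS: "closed S" unfolding S_def by (rule continuous_closed_preimage[OF cont]) auto
  have aS: "a \<in> S" using wa ab unfolding S_def by auto
  have bdd: "bdd_above S" unfolding S_def by (auto intro: bdd_aboveI[of _ b])
  define c where "c = Sup S"
  have cS': "c \<in> S" unfolding c_def using closed_contains_Sup[OF _ bdd cS] aS by blast
  have upper: "\<And>t. t \<in> S \<Longrightarrow> t \<le> c" unfolding c_def using bdd by (simp add: cSup_upper)
  have c: "a \<le> c" "c \<le> b" "w c \<le> 0" using cS' unfolding S_def by auto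
  have cont2: "continuous_on {c..b} w" using c by (intro continuous_on_subset[OF cont]) auto
  obtain z where z: "c \<le> z" "z \<le> b" "w z = 0" using IVT'[of w c 0 b, OF c(3) _ c(2) cont2] wb by auto
  have "z \<in> S" using z c unfolding S_def by auto
  then have "z = c" using upper z by force
  then have wc: "w c = 0" using z by simp
  have pos: "\<And>t. c < t \<Longrightarrow> t \<le> b \<Longrightarrow> 0 < w t"
  proof (rule ccontr)
    fix t assume "c < t" "t \<le> b" "\<not> 0 < w t"
    then have "t \<in> S" using c unfolding S_def by auto
    then show False using upper \<open>c < t\<close> by force
  qed
  define h where "h = (\<lambda>t. w t * exp (- L * t))"
  have "h b \<le> h c"
  proof (rule DERIV_nonpos_imp_nonincreasing[OF c(2)])
    fix t assume t: "c \<le> t" "t \<le> b"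
    have wt: "0 \<le> w t" using pos[of t] t wc by (cases "t = c") auto
    have "(h has_real_derivative (w' t - L * w t) * exp (- L * t)) (at t)"
      unfolding h_def using der[of t] t c
      by (auto intro!: derivative_eq_intros simp: algebra_simps)
    moreover have "(w' t - L * w t) * exp (- L * t) \<le> 0"
      using ineq[of t] t c wt by (simp add: mult_nonpos_nonneg)
    ultimately show "\<exists>y. DERIV h t :> y \<and> y \<le> 0" by blast
  qed
  moreover have "h c = 0" unfolding h_def using wc by simp
  moreover have "h b > 0" unfolding h_def using wb by simp
  ultimately show False by simp
qed




lemma omega_conv:
  fixes z :: "real \<Rightarrow> real \<times> real"
  assumes cont: "continuous_on UNIV z" and om: "omega_limit z = {p}"
  shows "(z \<longlongrightarrow> p) at_top"
proof (rule ccontr)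
  assume nc: "\<not> (z \<longlongrightarrow> p) at_top"
  then obtain e where e: "e > 0" "\<not> eventually (\<lambda>t. dist (z t) p < e) at_top"
    unfolding tendsto_iff by blast
  have fr: "\<exists>t\<ge>T. dist (z t) p \<ge> e" for T
  proof -
    have "\<not> (\<forall>t\<ge>T. dist (z t) p < e)" using e(2) unfolding eventually_at_top_linorder by blast
    then obtain t where "t \<ge> T" "\<not> dist (z t) p < e" by blast
    then show ?thesis by (intro exI[of _ t]) auto
  qed
  have "p \<in> omega_limit z" using om by simp
  then obtain s :: "nat \<Rightarrow> real" where s: "filterlim s at_top sequentially" "(\<lambda>n. z (s n)) \<longlonglongrightarrow> p"
    unfolding omega_limit_def by blast
  have "\<exists>r\<ge>real n. dist (z r) p = e" for n
  proof -
    have ev1: "eventually (\<lambda>m. s m \<ge> real n) sequentially"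
      using s(1) by (simp add: filterlim_at_top)
    have ev2: "eventually (\<lambda>m. dist (z (s m)) p < e) sequentially"
    proof -
      have "\<forall>\<epsilon>>0. eventually (\<lambda>m. dist (z (s m)) p < \<epsilon>) sequentially"
        using s(2) unfolding tendsto_iff .
      then show ?thesis using e(1) by blast
    qed
    have "eventually (\<lambda>m. s m \<ge> real n \<and> dist (z (s m)) p < e) sequentially"
      using ev1 ev2 by (rule eventually_conj)
    then obtain N where N: "\<forall>m\<ge>N. s m \<ge> real n \<and> dist (z (s m)) p < e"
      unfolding eventually_sequentially by blast
    obtain m where m: "s m \<ge> real n" "dist (z (s m)) p < e" using N by blast
    obtain t where t: "t \<ge> s m" "dist (z t) p \<ge> e" using fr by blast
    have "continuous_on {s m..t} (\<lambda>u. dist (z u) p)"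
      by (intro continuous_intros continuous_on_subset[OF cont]) auto
    then obtain r where "s m \<le> r" "r \<le> t" "dist (z r) p = e"
      using IVT'[of "\<lambda>u. dist (z u) p" "s m" e t] m t by auto
    then show ?thesis using m by (intro exI[of _ r]) auto
  qed
  then obtain r where r: "\<And>n. r n \<ge> real n" "\<And>n. dist (z (r n)) p = e" by (metis (no_types))
  have sp1: "\<forall>n. z (r n) \<in> sphere p e" using r(2) by (simp add: dist_commute)
  have sp2: "seq_compact (sphere p e)" by (rule compact_imp_seq_compact) simp
  obtain q \<sigma> where q: "q \<in> sphere p e" "strict_mono \<sigma>" "((\<lambda>n. z (r n)) \<circ> \<sigma>) \<longlonglongrightarrow> q"
    using seq_compactE[OF sp2 sp1] by blast
  have "filterlim (r \<circ> \<sigma>) at_top sequentially"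
  proof -
    have "filterlim (\<lambda>n. real (\<sigma> n)) at_top sequentially"
      by (rule filterlim_compose[OF filterlim_real_sequentially filterlim_subseq[OF q(2)]])
    then show ?thesis
      by (rule filterlim_at_top_mono) (auto simp: r(1))
  qed
  then have "q \<in> omega_limit z" unfolding omega_limit_def using q(3) by (intro CollectI exI[of _ "r \<circ> \<sigma>"]) (simp add: o_def)
  then have "q = p" using om by simp
  then show False using q(1) e(1) by simp
qed




lemma alpha_omega: "alpha_limit z = omega_limit (\<lambda>t. z (- t))"
proof (intro set_eqI iffI)
  fix q assume "q \<in> alpha_limit z"
  then obtain t :: "nat \<Rightarrow> real" where t: "filterlim t at_bot sequentially" "(\<lambda>n. z (t n)) \<longlonglongrightarrow> q"
    unfolding alpha_limit_def by blast
  have "filterlim (\<lambda>n. - t n) at_top sequentially" using t(1) filterlim_uminus_at_bot by blast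
  then show "q \<in> omega_limit (\<lambda>t. z (- t))" unfolding omega_limit_def using t(2)
    by (intro CollectI exI[of _ "\<lambda>n. - t n"]) simp
next
  fix q assume "q \<in> omega_limit (\<lambda>t. z (- t))"
  then obtain t :: "nat \<Rightarrow> real" where t: "filterlim t at_top sequentially" "(\<lambda>n. z (- t n)) \<longlonglongrightarrow> q"
    unfolding omega_limit_def by blast
  have "filterlim (\<lambda>n. - t n) at_bot sequentially" using t(1) filterlim_uminus_at_bot[of "\<lambda>n. - t n"] by simp
  then show "q \<in> alpha_limit z" unfolding alpha_limit_def using t(2)
    by (intro CollectI exI[of _ "\<lambda>n. - t n"]) simp
qed

lemma partial_y:
  fixes h :: "real \<Rightarrow> real \<Rightarrow> real"
  assumes "smooth_on UNIV (\<lambda>p::real \<times> real. h (fst p) (snd p))"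
  shows "\<exists>G. continuous_on UNIV G \<and> (\<forall>x y. ((\<lambda>y. h x y) has_real_derivative G (x,y)) (at y))"
proof -
  obtain D :: "(real \<times> real) list \<Rightarrow> real \<times> real \<Rightarrow> real" where
    D0: "\<And>p. D [] p = h (fst p) (snd p)" and
    DD: "\<And>vs p. ((\<lambda>q. D vs q) has_derivative (\<lambda>v. D (v # vs) p)) (at p)"
    using assms unfolding smooth_on_def by blast
  define G where "G = (\<lambda>p. D [(0,1)] p)"
  have "continuous_on UNIV G" unfolding G_def
    by (intro continuous_at_imp_continuous_on ballI has_derivative_continuous[OF DD])
  moreover have "((\<lambda>y. h x y) has_real_derivative G (x,y)) (at y)" for x y
  proof -
    have d1: "((\<lambda>t::real. (x, t)) has_derivative (\<lambda>t. (0, t))) (at y)"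
      by (auto intro!: derivative_eq_intros)
    have d2: "((\<lambda>q. D [] q) has_derivative (\<lambda>v. D [v] (x,y))) (at (x, y))" using DD by simp
    have bl: "bounded_linear (\<lambda>v. D [v] (x,y))" using d2 by (rule has_derivative_bounded_linear)
    have c: "((\<lambda>t. D [] (x, t)) has_derivative (\<lambda>t. D [(0,t)] (x,y))) (at y)"
      using has_derivative_compose[OF d1 d2] by simp
    have eq: "(\<lambda>t. D [(0,t)] (x,y)) = (\<lambda>t. G (x,y) * t)"
    proof
      fix t :: real
      have "D [(0,t)] (x,y) = D [t *\<^sub>R (0,1)] (x,y)" by simp
      also have "\<dots> = t *\<^sub>R D [(0,1)] (x,y)" using linear_cmul[OF bounded_linear.linear[OF bl], of t "(0,1)"] by simp
      finally show "D [(0,t)] (x,y) = G (x,y) * t" unfolding G_def by simp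
    qed
    show ?thesis using c unfolding eq has_field_derivative_def D0 by simp
  qed
  ultimately show ?thesis by blast
qed

lemma partial_mu:
  fixes g :: "real \<Rightarrow> real \<Rightarrow> real \<Rightarrow> real"
  assumes "C1_on (I \<times> UNIV) (\<lambda>q::real \<times> real \<times> real. g (fst q) (fst (snd q)) (snd (snd q)))"
    and "m \<in> I"
  shows "\<exists>c. ((\<lambda>m. g m x y) has_real_derivative c) (at m)"
proof -
  obtain D :: "real \<times> real \<times> real \<Rightarrow> (real \<times> real \<times> real) \<Rightarrow>\<^sub>L real" where
    D: "\<And>p. p \<in> I \<times> UNIV \<Longrightarrow> ((\<lambda>q::real \<times> real \<times> real. g (fst q) (fst (snd q)) (snd (snd q))) has_derivative blinfun_apply (D p)) (at p)"
    using assms(1) unfolding C1_on_def by blast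
  have d1: "((\<lambda>t::real. (t, x, y)) has_derivative (\<lambda>t. (t, 0, 0))) (at m)"
    by (auto intro!: derivative_eq_intros simp: zero_prod_def)
  have d2: "((\<lambda>q::real \<times> real \<times> real. g (fst q) (fst (snd q)) (snd (snd q))) has_derivative blinfun_apply (D (m,x,y))) (at (m,x,y))"
    using D assms(2) by auto
  have c: "((\<lambda>t. g t x y) has_derivative (\<lambda>t. blinfun_apply (D (m,x,y)) (t,0,0))) (at m)"
    using has_derivative_compose[OF d1 d2] by simp
  have eq: "(\<lambda>t. blinfun_apply (D (m,x,y)) (t,0,0)) = (\<lambda>t. blinfun_apply (D (m,x,y)) (1,0,0) * t)"
  proof
    fix t :: real
    have "blinfun_apply (D (m,x,y)) (t,0,0) = blinfun_apply (D (m,x,y)) (t *\<^sub>R (1,0,0))" by simp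
    also have "\<dots> = t *\<^sub>R blinfun_apply (D (m,x,y)) (1,0,0)" by (rule blinfun.scaleR_right)
    finally show "blinfun_apply (D (m,x,y)) (t,0,0) = blinfun_apply (D (m,x,y)) (1,0,0) * t" by simp
  qed
  show ?thesis using c unfolding eq has_field_derivative_def by blast
qed




lemma lip:
  fixes h :: "real \<Rightarrow> real \<Rightarrow> real" and G :: "real \<times> real \<Rightarrow> real"
  assumes cG: "continuous_on UNIV G" and dG: "\<And>x y. ((\<lambda>y. h x y) has_real_derivative G (x,y)) (at y)"
  shows "\<exists>B. \<forall>x u v. a \<le> x \<longrightarrow> x \<le> b \<longrightarrow> \<bar>u\<bar> \<le> R \<longrightarrow> \<bar>v\<bar> \<le> R \<longrightarrow> \<bar>h x u - h x v\<bar> \<le> B * \<bar>u - v\<bar>"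
proof -
  have "compact ({a..b} \<times> {-R..R})" by (intro compact_Times) auto
  then have "compact (G ` ({a..b} \<times> {-R..R}))"
    by (rule compact_continuous_image[OF continuous_on_subset[OF cG subset_UNIV]])
  then have "bounded (G ` ({a..b} \<times> {-R..R}))" by (rule compact_imp_bounded)
  then obtain B where B: "\<And>p. p \<in> {a..b} \<times> {-R..R} \<Longrightarrow> \<bar>G p\<bar> \<le> B"
    unfolding bounded_iff by auto
  have main: "\<bar>h x u - h x v\<bar> \<le> B * \<bar>u - v\<bar>" if H: "a \<le> x" "x \<le> b" "\<bar>u\<bar> \<le> R" "\<bar>v\<bar> \<le> R" "u < v" for x u v
  proof -
    obtain z where z: "u < z" "z < v" "h x v - h x u = (v - u) * G (x, z)"
      using MVT2[of u v "h x" "\<lambda>z. G (x,z)", OF H(5) dG] by blast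
    have "-R \<le> z \<and> z \<le> R" using H z unfolding abs_le_iff by linarith
    then have "\<bar>G (x,z)\<bar> \<le> B" using B[of "(x,z)"] H by auto
    then have "\<bar>(v - u) * G (x, z)\<bar> \<le> (v - u) * B" using H
      by (simp add: abs_mult mult_left_mono)
    then have "\<bar>h x v - h x u\<bar> \<le> (v - u) * B" using z by simp
    then show ?thesis using H by (simp add: abs_minus_commute mult.commute)
  qed
  show ?thesis
  proof (intro exI allI impI)
    fix x u v assume h: "a \<le> x" "x \<le> b" "\<bar>u\<bar> \<le> R" "\<bar>v\<bar> \<le> R"
    consider "u < v" | "u = v" | "v < u" by linarith
    then show "\<bar>h x u - h x v\<bar> \<le> B * \<bar>u - v\<bar>"
    proof cases
      case 1 then show ?thesis using main h by blast
    next
      case 2 then show ?thesis by simp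
    next
      case 3 then show ?thesis using main[of x v u] h by (simp add: abs_minus_commute)
    qed
  qed
qed

lemma locmono:
  fixes h :: "real \<Rightarrow> real \<Rightarrow> real" and G :: "real \<times> real \<Rightarrow> real"
  assumes cG: "continuous_on UNIV G" and dG: "\<And>x y. ((\<lambda>y. h x y) has_real_derivative G (x,y)) (at y)"
    and neg: "G (x0, s) < 0"
  shows "\<exists>\<delta>>0. \<forall>x u v. \<bar>x - x0\<bar> < \<delta> \<longrightarrow> \<bar>u - s\<bar> < \<delta> \<longrightarrow> \<bar>v - s\<bar> < \<delta> \<longrightarrow> u < v \<longrightarrow> h x v < h x u"
proof -
  have "isCont G (x0, s)" using cG by (simp add: continuous_on_eq_continuous_at)
  then obtain d where d: "d > 0" "\<And>p. dist p (x0,s) < d \<Longrightarrow> dist (G p) (G (x0,s)) < - G (x0,s)"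
    using neg unfolding continuous_at_eps_delta by (metis neg_0_less_iff_less)
  have Gneg: "G p < 0" if "dist p (x0,s) < d" for p
    using d(2)[OF that] by (simp add: dist_real_def)
  have key: "G (x, z) < 0" if "\<bar>x - x0\<bar> < d/2" "\<bar>z - s\<bar> < d/2" for x z
  proof -
    have nn: "0 \<le> dist x x0" "0 \<le> dist z s" by simp_all
    have "(dist x x0)^2 + (dist z s)^2 \<le> (dist x x0 + dist z s)^2"
      using mult_nonneg_nonneg[OF nn] by (simp add: power2_eq_square algebra_simps)
    then have "sqrt ((dist x x0)^2 + (dist z s)^2) \<le> sqrt ((dist x x0 + dist z s)^2)"
      by (rule real_sqrt_le_mono)
    then have "dist (x, z) (x0, s) \<le> dist x x0 + dist z s"
      using nn by (simp add: dist_Pair_Pair)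
    also have "\<dots> < d" using that by (simp add: dist_real_def)
    finally show ?thesis by (rule Gneg)
  qed
  show ?thesis
  proof (intro exI[of _ "d/2"] conjI allI impI)
    show "d/2 > 0" using d by simp
    fix x u v assume h: "\<bar>x - x0\<bar> < d/2" "\<bar>u - s\<bar> < d/2" "\<bar>v - s\<bar> < d/2" "u < v"
    obtain z where z: "u < z" "z < v" "h x v - h x u = (v - u) * G (x, z)"
      using MVT2[of u v "h x" "\<lambda>z. G (x,z)", OF h(4) dG] by blast
    have "\<bar>z - s\<bar> < d/2" using z h unfolding abs_less_iff by linarith
    then have "G (x,z) < 0" using key h by blast
    then have "(v - u) * G (x, z) < 0" using h by (simp add: mult_pos_neg)
    then show "h x v < h x u" using z by simp
  qed
qed




lemma core_back:
  fixes x y1 y2 :: "real \<Rightarrow> real" and h1 h2 :: "real \<Rightarrow> real \<Rightarrow> real"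
  assumes hle: "\<And>t y. h2 (x t) y \<le> h1 (x t) y"
    and lipz: "\<And>R. \<exists>B. \<forall>t u v. \<bar>u\<bar> \<le> R \<longrightarrow> \<bar>v\<bar> \<le> R \<longrightarrow> \<bar>h1 (x t) u - h1 (x t) v\<bar> \<le> B * \<bar>u - v\<bar>"
    and d1: "\<And>t. (y1 has_real_derivative h1 (x t) (y1 t)) (at t)"
    and d2: "\<And>t. (y2 has_real_derivative h2 (x t) (y2 t)) (at t)"
    and cx: "(x \<longlongrightarrow> x0) at_bot" and c1: "(y1 \<longlongrightarrow> s1) at_bot" and c2: "(y2 \<longlongrightarrow> s2) at_bot"
    and s21: "s2 \<le> s1"
    and lm: "\<exists>\<delta>>0. \<forall>x' u v. \<bar>x' - x0\<bar> < \<delta> \<longrightarrow> \<bar>u - s1\<bar> < \<delta> \<longrightarrow> \<bar>v - s1\<bar> < \<delta> \<longrightarrow> u < v \<longrightarrow> h1 x' v < h1 x' u"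
  shows "y2 t0 \<le> y1 t0"
proof (rule ccontr)
  assume "\<not> y2 t0 \<le> y1 t0"
  then have w0: "0 < y2 t0 - y1 t0" by simp
  define w where "w = (\<lambda>t. y2 t - y1 t)"
  define w' where "w' = (\<lambda>t. h2 (x t) (y2 t) - h1 (x t) (y1 t))"
  have dw: "(w has_real_derivative w' t) (at t)" for t
    unfolding w_def w'_def by (intro derivative_intros d1 d2)
  have w'le: "w' t \<le> h1 (x t) (y2 t) - h1 (x t) (y1 t)" for t
    unfolding w'_def using hle[of t "y2 t"] by simp
  have cy1: "continuous_on A y1" for A
    by (intro continuous_at_imp_continuous_on ballI DERIV_isCont[OF d1])
  have cy2: "continuous_on A y2" for A
    by (intro continuous_at_imp_continuous_on ballI DERIV_isCont[OF d2])
  have pos: "0 < w t" if "t \<le> t0" for t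
  proof -
    have "compact (y1 ` {t..t0} \<union> y2 ` {t..t0})"
      by (intro compact_Un compact_continuous_image cy1 cy2 compact_Icc)
    then obtain R where R: "\<And>z. z \<in> y1 ` {t..t0} \<union> y2 ` {t..t0} \<Longrightarrow> norm z \<le> R"
      using compact_imp_bounded bounded_iff by metis
    obtain B where B: "\<forall>t u v. \<bar>u\<bar> \<le> R \<longrightarrow> \<bar>v\<bar> \<le> R \<longrightarrow> \<bar>h1 (x t) u - h1 (x t) v\<bar> \<le> B * \<bar>u - v\<bar>"
      using lipz by blast
    show ?thesis
    proof (rule gronwall_back[of t t0 w w' B])
      show "t \<le> t0" by fact
      show "\<And>s. t \<le> s \<Longrightarrow> s \<le> t0 \<Longrightarrow> (w has_real_derivative w' s) (at s)" using dw by blast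
      show "0 < w t0" using w0 unfolding w_def .
      fix s assume s: "t \<le> s" "s \<le> t0" "0 \<le> w s"
      have "\<bar>y1 s\<bar> \<le> R" "\<bar>y2 s\<bar> \<le> R" using R s by auto
      then have "\<bar>h1 (x s) (y2 s) - h1 (x s) (y1 s)\<bar> \<le> B * \<bar>y2 s - y1 s\<bar>" using B by blast
      then show "w' s \<le> B * w s" using w'le[of s] s(3) unfolding w_def by simp
    qed
  qed
  have cw: "(w \<longlongrightarrow> s2 - s1) at_bot" unfolding w_def by (intro tendsto_intros c1 c2)
  have evle: "eventually (\<lambda>t. t \<le> t0) at_bot" by (rule eventually_le_at_bot)
  have evw: "eventually (\<lambda>i. 0 \<le> w i) at_bot"
    using evle by (rule eventually_mono) (simp add: less_imp_le pos)
  have "0 \<le> s2 - s1"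
    by (rule tendsto_lowerbound[OF cw evw]) simp
  then have s12: "s1 = s2" using s21 by simp
  obtain \<delta> where \<delta>: "\<delta> > 0" "\<And>x' u v. \<bar>x' - x0\<bar> < \<delta> \<Longrightarrow> \<bar>u - s1\<bar> < \<delta> \<Longrightarrow> \<bar>v - s1\<bar> < \<delta> \<Longrightarrow> u < v \<Longrightarrow> h1 x' v < h1 x' u"
    using lm by blast
  have e1: "eventually (\<lambda>t. \<bar>x t - x0\<bar> < \<delta>) at_bot" using cx \<delta>(1) unfolding tendsto_iff dist_real_def by blast
  have e2: "eventually (\<lambda>t. \<bar>y1 t - s1\<bar> < \<delta>) at_bot" using c1 \<delta>(1) unfolding tendsto_iff dist_real_def by blast
  have e3: "eventually (\<lambda>t. \<bar>y2 t - s1\<bar> < \<delta>) at_bot" using c2 \<delta>(1) unfolding s12 tendsto_iff dist_real_def by blast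
  have "eventually (\<lambda>t. \<bar>x t - x0\<bar> < \<delta> \<and> \<bar>y1 t - s1\<bar> < \<delta> \<and> \<bar>y2 t - s1\<bar> < \<delta> \<and> t \<le> t0) at_bot"
    using e1 e2 e3 evle by (intro eventually_conj)
  then obtain T where T: "\<And>t. t \<le> T \<Longrightarrow> \<bar>x t - x0\<bar> < \<delta> \<and> \<bar>y1 t - s1\<bar> < \<delta> \<and> \<bar>y2 t - s1\<bar> < \<delta> \<and> t \<le> t0"
    unfolding eventually_at_bot_linorder by blast
  have wneg: "w' t < 0" if "t \<le> T" for t
  proof -
    have "0 < w t" using pos T[OF that] by blast
    then have "y1 t < y2 t" unfolding w_def by simp
    then have "h1 (x t) (y2 t) < h1 (x t) (y1 t)" using \<delta>(2) T[OF that] by blast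
    then show ?thesis using w'le[of t] by simp
  qed
  have wT: "w T \<le> w t" if "t \<le> T" for t
    by (rule DERIV_nonpos_imp_nonincreasing[OF that]) (use dw wneg in \<open>fastforce\<close>)
  have wTpos: "0 < w T" using pos T[of T] by simp
  have cw0: "(w \<longlongrightarrow> 0) at_bot" using cw s12 by simp
  have "eventually (\<lambda>t. \<bar>w t - 0\<bar> < w T) at_bot"
    using cw0 wTpos unfolding tendsto_iff dist_real_def by blast
  then have "eventually (\<lambda>t. w t < w T) at_bot"
    by (rule eventually_mono) simp
  moreover have "eventually (\<lambda>t. t \<le> T) at_bot" by (rule eventually_le_at_bot)
  ultimately have "eventually (\<lambda>t. w t < w T \<and> t \<le> T) at_bot"
    by (rule eventually_conj)
  then obtain S where S: "\<And>t. t \<le> S \<Longrightarrow> w t < w T \<and> t \<le> T"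
    unfolding eventually_at_bot_linorder by blast
  have m: "min S T \<le> S" "min S T \<le> T" by auto
  show False using S[OF m(1)] wT[OF m(2)] by linarith
qed




lemma conv_bot:
  fixes x y :: "real \<Rightarrow> real"
  assumes "continuous_on UNIV x" "continuous_on UNIV y" "alpha_limit (\<lambda>\<tau>. (x \<tau>, y \<tau>)) = {(a,b)}"
  shows "(x \<longlongrightarrow> a) at_bot" "(y \<longlongrightarrow> b) at_bot"
proof -
  have c: "continuous_on UNIV (\<lambda>t. (x (- t), y (- t)))"
    by (intro continuous_intros continuous_on_compose2[OF assms(1)] continuous_on_compose2[OF assms(2)]) auto
  have "omega_limit (\<lambda>t. (x (- t), y (- t))) = {(a,b)}" using assms(3) alpha_omega[of "\<lambda>\<tau>. (x \<tau>, y \<tau>)"] by simp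
  then have "((\<lambda>t. (x (- t), y (- t))) \<longlongrightarrow> (a,b)) at_top" using omega_conv[OF c] by blast
  then have "((\<lambda>t. (x t, y t)) \<longlongrightarrow> (a,b)) at_bot" using filterlim_at_bot_mirror[of "\<lambda>t. (x t, y t)"] by simp
  then show "(x \<longlongrightarrow> a) at_bot" "(y \<longlongrightarrow> b) at_bot" using tendsto_fst tendsto_snd by fastforce+
qed

lemma conv_top:
  fixes x y :: "real \<Rightarrow> real"
  assumes "continuous_on UNIV x" "continuous_on UNIV y" "omega_limit (\<lambda>\<tau>. (x \<tau>, y \<tau>)) = {(a,b)}"
  shows "(x \<longlongrightarrow> a) at_top" "(y \<longlongrightarrow> b) at_top"
proof -
  have c: "continuous_on UNIV (\<lambda>t. (x t, y t))"
    by (intro continuous_intros assms(1,2))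
  have "((\<lambda>t. (x t, y t)) \<longlongrightarrow> (a,b)) at_top" using omega_conv[OF c assms(3)] .
  then show "(x \<longlongrightarrow> a) at_top" "(y \<longlongrightarrow> b) at_top" using tendsto_fst tendsto_snd by fastforce+
qed

theorem lemma1:
  fixes xm xp :: real
    and f :: "real \<Rightarrow> real"
    and g :: "real \<Rightarrow> real \<Rightarrow> real \<Rightarrow> real"  \<comment> \<open>g \<mu> x y\<close>
    and I :: "real set"
    and sm nm sp np :: "real \<Rightarrow> real"
    and x :: "real \<Rightarrow> real"
  assumes xm_xp: "xm < xp"
    and I_interval: "open I" "is_interval I" "I \<noteq> {}"
    and f_smooth: "smooth_on UNIV f"
    and g_smooth: "\<And>\<mu>. \<mu> \<in> I \<Longrightarrow> smooth_on UNIV (\<lambda>p::real \<times> real. g \<mu> (fst p) (snd p))"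
    and g_C1: "C1_on (I \<times> UNIV) (\<lambda>q::real \<times> real \<times> real. g (fst q) (fst (snd q)) (snd (snd q)))"
    and g_periodic: "\<And>\<mu> x y. \<mu> \<in> I \<Longrightarrow> g \<mu> x (y + 2 * pi) = g \<mu> x y"
    and f_bd: "f xm = 0" "f xp = 0"
    and f_pos: "\<And>z. xm < z \<Longrightarrow> z < xp \<Longrightarrow> f z > 0"
    and f_deriv: "deriv f xm \<ge> 0" "deriv f xp \<le> 0"
    and zeros_m: "\<And>\<mu> y. \<mu> \<in> I \<Longrightarrow> g \<mu> xm y = 0 \<longleftrightarrow>
                    (\<exists>k::int. y = sm \<mu> + 2 * pi * k) \<or> (\<exists>k::int. y = nm \<mu> + 2 * pi * k)"
    and zeros_p: "\<And>\<mu> y. \<mu> \<in> I \<Longrightarrow> g \<mu> xp y = 0 \<longleftrightarrow>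
                    (\<exists>k::int. y = sp \<mu> + 2 * pi * k) \<or> (\<exists>k::int. y = np \<mu> + 2 * pi * k)"
    and order_m: "\<And>\<mu>. \<mu> \<in> I \<Longrightarrow> - pi \<le> sm \<mu> \<and> sm \<mu> < nm \<mu> \<and> nm \<mu> \<le> pi"
    and order_p: "\<And>\<mu>. \<mu> \<in> I \<Longrightarrow> - pi \<le> sp \<mu> \<and> sp \<mu> < np \<mu> \<and> np \<mu> \<le> pi"
    and hyp_m: "\<And>\<mu>. \<mu> \<in> I \<Longrightarrow> deriv (\<lambda>y. g \<mu> xm y) (nm \<mu>) > 0 \<and> deriv (\<lambda>y. g \<mu> xm y) (sm \<mu>) < 0"
    and hyp_p: "\<And>\<mu>. \<mu> \<in> I \<Longrightarrow> deriv (\<lambda>y. g \<mu> xp y) (np \<mu>) < 0 \<and> deriv (\<lambda>y. g \<mu> xp y) (sp \<mu>) > 0"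
    and twist: "\<And>\<mu>. \<mu> \<in> I \<Longrightarrow> \<exists>k::int. sm \<mu> - nm \<mu> = np \<mu> - sp \<mu> + 2 * pi * k"
    and nonwand: "\<And>\<mu> p. \<mu> \<in> I \<Longrightarrow>
        nonwandering (\<lambda>q::real \<times> real. (f (fst q), g \<mu> (fst q) (snd q))) ({xm..xp} \<times> UNIV) p \<Longrightarrow>
        \<exists>k::int. p = (xm, sm \<mu> + 2 * pi * k) \<or> p = (xm, nm \<mu> + 2 * pi * k)
               \<or> p = (xp, sp \<mu> + 2 * pi * k) \<or> p = (xp, np \<mu> + 2 * pi * k)"
    and monotone_M: "\<And>\<mu> x y. \<mu> \<in> I \<Longrightarrow> xm \<le> x \<Longrightarrow> x \<le> xp \<Longrightarrow> deriv (\<lambda>m. g m x y) \<mu> \<le> 0"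
    and x_sol: "\<And>\<tau>. (x has_real_derivative f (x \<tau>)) (at \<tau>)"
    and x_range: "\<And>\<tau>. xm < x \<tau> \<and> x \<tau> < xp"
  shows "(\<forall>\<mu>1\<in>I. \<forall>\<mu>2\<in>I. \<forall>y1 y2. \<mu>1 < \<mu>2
            \<and> (\<forall>\<tau>. (y1 has_real_derivative g \<mu>1 (x \<tau>) (y1 \<tau>)) (at \<tau>))
            \<and> alpha_limit (\<lambda>\<tau>. (x \<tau>, y1 \<tau>)) = {(xm, sm \<mu>1)}
            \<and> (\<forall>\<tau>. (y2 has_real_derivative g \<mu>2 (x \<tau>) (y2 \<tau>)) (at \<tau>))
            \<and> alpha_limit (\<lambda>\<tau>. (x \<tau>, y2 \<tau>)) = {(xm, sm \<mu>2)}
          \<longrightarrow> (\<forall>\<tau>. y1 \<tau> \<ge> y2 \<tau>))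
       \<and> (\<forall>\<mu>1\<in>I. \<forall>\<mu>2\<in>I. \<forall>y1 y2. \<mu>1 < \<mu>2
            \<and> (\<forall>\<tau>. (y1 has_real_derivative g \<mu>1 (x \<tau>) (y1 \<tau>)) (at \<tau>))
            \<and> omega_limit (\<lambda>\<tau>. (x \<tau>, y1 \<tau>)) = {(xp, sp \<mu>1)}
            \<and> (\<forall>\<tau>. (y2 has_real_derivative g \<mu>2 (x \<tau>) (y2 \<tau>)) (at \<tau>))
            \<and> omega_limit (\<lambda>\<tau>. (x \<tau>, y2 \<tau>)) = {(xp, sp \<mu>2)}
          \<longrightarrow> (\<forall>\<tau>. y1 \<tau> \<le> y2 \<tau>))"
proof -
  have cx: "continuous_on UNIV x"
    by (intro continuous_at_imp_continuous_on ballI DERIV_isCont[OF x_sol])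
  have gmono: "g m2 a y \<le> g m1 a y" if H: "m1 \<in> I" "m2 \<in> I" "m1 \<le> m2" "xm \<le> a" "a \<le> xp" for m1 m2 a y
  proof (rule DERIV_nonpos_imp_nonincreasing[of m1 m2 "\<lambda>m. g m a y", OF H(3)])
    fix m assume m: "m1 \<le> m" "m \<le> m2"
    have mI: "m \<in> I" using I_interval(2) H m unfolding is_interval_1 by blast
    obtain c where c: "((\<lambda>m. g m a y) has_real_derivative c) (at m)" using partial_mu[OF g_C1 mI] by blast
    have "deriv (\<lambda>m. g m a y) m = c" using c by (rule DERIV_imp_deriv)
    then have "c \<le> 0" using monotone_M[OF mI H(4,5), of y] by simp
    then show "\<exists>d. ((\<lambda>m. g m a y) has_real_derivative d) (at m) \<and> d \<le> 0" using c by blast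
  qed
  have gy: "\<exists>G. continuous_on UNIV G \<and> (\<forall>a b. ((\<lambda>b. g \<mu> a b) has_real_derivative G (a,b)) (at b))"
    if "\<mu> \<in> I" for \<mu>
    using partial_y[OF g_smooth[OF that]] by simp
  have lipx: "\<exists>B. \<forall>t u v. \<bar>u\<bar> \<le> R \<longrightarrow> \<bar>v\<bar> \<le> R \<longrightarrow> \<bar>g \<mu> (x t) u - g \<mu> (x t) v\<bar> \<le> B * \<bar>u - v\<bar>"
    if mu: "\<mu> \<in> I" for \<mu> R
  proof -
    obtain G where G: "continuous_on UNIV G" "\<And>a b. ((\<lambda>b. g \<mu> a b) has_real_derivative G (a,b)) (at b)"
      using gy[OF mu] by blast
    obtain B where B: "\<forall>a u v. xm \<le> a \<longrightarrow> a \<le> xp \<longrightarrow> \<bar>u\<bar> \<le> R \<longrightarrow> \<bar>v\<bar> \<le> R \<longrightarrow> \<bar>g \<mu> a u - g \<mu> a v\<bar> \<le> B * \<bar>u - v\<bar>"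
      using lip[OF G, of xm xp R] by blast
    show ?thesis
    proof (intro exI allI impI)
      fix t u v assume "\<bar>u\<bar> \<le> R" "\<bar>v\<bar> \<le> R"
      moreover have "xm \<le> x t" "x t \<le> xp" using x_range[of t] by auto
      ultimately show "\<bar>g \<mu> (x t) u - g \<mu> (x t) v\<bar> \<le> B * \<bar>u - v\<bar>" using B by blast
    qed
  qed
  show ?thesis
  proof (intro conjI ballI allI impI)
    fix \<mu>1 \<mu>2 y1 y2 t
    assume m: "\<mu>1 \<in> I" "\<mu>2 \<in> I"
    assume H: "\<mu>1 < \<mu>2
            \<and> (\<forall>\<tau>. (y1 has_real_derivative g \<mu>1 (x \<tau>) (y1 \<tau>)) (at \<tau>))
            \<and> alpha_limit (\<lambda>\<tau>. (x \<tau>, y1 \<tau>)) = {(xm, sm \<mu>1)}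
            \<and> (\<forall>\<tau>. (y2 has_real_derivative g \<mu>2 (x \<tau>) (y2 \<tau>)) (at \<tau>))
            \<and> alpha_limit (\<lambda>\<tau>. (x \<tau>, y2 \<tau>)) = {(xm, sm \<mu>2)}"
    have lt: "\<mu>1 < \<mu>2" using H by blast
    have d1: "\<And>\<tau>. (y1 has_real_derivative g \<mu>1 (x \<tau>) (y1 \<tau>)) (at \<tau>)" using H by blast
    have d2: "\<And>\<tau>. (y2 has_real_derivative g \<mu>2 (x \<tau>) (y2 \<tau>)) (at \<tau>)" using H by blast
    have cy1: "continuous_on UNIV y1" by (intro continuous_at_imp_continuous_on ballI DERIV_isCont[OF d1])
    have cy2: "continuous_on UNIV y2" by (intro continuous_at_imp_continuous_on ballI DERIV_isCont[OF d2])
    have cv1: "(x \<longlongrightarrow> xm) at_bot" "(y1 \<longlongrightarrow> sm \<mu>1) at_bot" using conv_bot[OF cx cy1] H by blast+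
    have cv2: "(y2 \<longlongrightarrow> sm \<mu>2) at_bot" using conv_bot[OF cx cy2] H by blast
    obtain G1 where G1: "continuous_on UNIV G1" "\<And>a b. ((\<lambda>b. g \<mu>1 a b) has_real_derivative G1 (a,b)) (at b)"
      using gy[OF m(1)] by blast
    obtain G2 where G2: "continuous_on UNIV G2" "\<And>a b. ((\<lambda>b. g \<mu>2 a b) has_real_derivative G2 (a,b)) (at b)"
      using gy[OF m(2)] by blast
    have G1s: "G1 (xm, sm \<mu>1) < 0" using hyp_m[OF m(1)] DERIV_imp_deriv[OF G1(2)] by simp
    have G2s: "G2 (xm, sm \<mu>2) < 0" using hyp_m[OF m(2)] DERIV_imp_deriv[OF G2(2)] by simp
    have G2n: "G2 (xm, nm \<mu>2) > 0" using hyp_m[OF m(2)] DERIV_imp_deriv[OF G2(2)] by simp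
    have s21: "sm \<mu>2 \<le> sm \<mu>1"
    proof (rule zero_order[where \<phi>="g \<mu>2 xm" and \<psi>="g \<mu>1 xm" and a="sm \<mu>2" and b="nm \<mu>2" and da="G2 (xm, sm \<mu>2)" and db="G2 (xm, nm \<mu>2)"
          and s="sm \<mu>1" and ds="G1 (xm, sm \<mu>1)"])
      show "\<And>y. g \<mu>2 xm y \<le> g \<mu>1 xm y" using gmono[OF m less_imp_le[OF lt]] xm_xp by simp
      show "\<And>y. g \<mu>2 xm (y + 2 * pi) = g \<mu>2 xm y" using g_periodic[OF m(2)] by simp
      show "\<And>y. (g \<mu>2 xm y = 0) = ((\<exists>k::int. y = sm \<mu>2 + 2 * pi * k) \<or> (\<exists>k::int. y = nm \<mu>2 + 2 * pi * k))"
        using zeros_m[OF m(2)] by simp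
      show "- pi \<le> sm \<mu>2" "sm \<mu>2 < nm \<mu>2" "nm \<mu>2 \<le> pi" using order_m[OF m(2)] by auto
      show "DERIV (g \<mu>2 xm) (sm \<mu>2) :> G2 (xm, sm \<mu>2)" using G2(2) by simp
      show "G2 (xm, sm \<mu>2) < 0" by (fact G2s)
      show "DERIV (g \<mu>2 xm) (nm \<mu>2) :> G2 (xm, nm \<mu>2)" using G2(2) by simp
      show "G2 (xm, nm \<mu>2) > 0" by (fact G2n)
      show "\<And>y. isCont (g \<mu>2 xm) y" using G2(2) DERIV_isCont by fastforce
      show "g \<mu>1 xm (sm \<mu>1) = 0" using zeros_m[OF m(1), of "sm \<mu>1"] by (auto intro: exI[of _ 0])
      show "DERIV (g \<mu>1 xm) (sm \<mu>1) :> G1 (xm, sm \<mu>1)" using G1(2) by simp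
      show "G1 (xm, sm \<mu>1) < 0" by (fact G1s)
      show "- pi \<le> sm \<mu>1" using order_m[OF m(1)] by auto
    qed
    show "y2 t \<le> y1 t"
    proof (rule core_back[of "g \<mu>2" x "g \<mu>1" y1 y2 xm "sm \<mu>1" "sm \<mu>2"])
      show "\<And>t y. g \<mu>2 (x t) y \<le> g \<mu>1 (x t) y"
        using gmono[OF m less_imp_le[OF lt]] x_range by (simp add: less_imp_le)
      show "\<And>R. \<exists>B. \<forall>t u v. \<bar>u\<bar> \<le> R \<longrightarrow> \<bar>v\<bar> \<le> R \<longrightarrow> \<bar>g \<mu>1 (x t) u - g \<mu>1 (x t) v\<bar> \<le> B * \<bar>u - v\<bar>"
        using lipx[OF m(1)] by blast
      show "\<And>t. (y1 has_real_derivative g \<mu>1 (x t) (y1 t)) (at t)" by (fact d1)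
      show "\<And>t. (y2 has_real_derivative g \<mu>2 (x t) (y2 t)) (at t)" by (fact d2)
      show "(x \<longlongrightarrow> xm) at_bot" "(y1 \<longlongrightarrow> sm \<mu>1) at_bot" by (fact cv1)+
      show "(y2 \<longlongrightarrow> sm \<mu>2) at_bot" by (fact cv2)
      show "sm \<mu>2 \<le> sm \<mu>1" by (fact s21)
      show "\<exists>\<delta>>0. \<forall>x' u v. \<bar>x' - xm\<bar> < \<delta> \<longrightarrow> \<bar>u - sm \<mu>1\<bar> < \<delta> \<longrightarrow> \<bar>v - sm \<mu>1\<bar> < \<delta> \<longrightarrow> u < v \<longrightarrow> g \<mu>1 x' v < g \<mu>1 x' u"
        by (rule locmono[OF G1 G1s])
    qed
  next
    fix \<mu>1 \<mu>2 y1 y2 t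
    assume m: "\<mu>1 \<in> I" "\<mu>2 \<in> I"
    assume H: "\<mu>1 < \<mu>2
            \<and> (\<forall>\<tau>. (y1 has_real_derivative g \<mu>1 (x \<tau>) (y1 \<tau>)) (at \<tau>))
            \<and> omega_limit (\<lambda>\<tau>. (x \<tau>, y1 \<tau>)) = {(xp, sp \<mu>1)}
            \<and> (\<forall>\<tau>. (y2 has_real_derivative g \<mu>2 (x \<tau>) (y2 \<tau>)) (at \<tau>))
            \<and> omega_limit (\<lambda>\<tau>. (x \<tau>, y2 \<tau>)) = {(xp, sp \<mu>2)}"
    have lt: "\<mu>1 < \<mu>2" using H by blast
    have d1: "\<And>\<tau>. (y1 has_real_derivative g \<mu>1 (x \<tau>) (y1 \<tau>)) (at \<tau>)" using H by blast
    have d2: "\<And>\<tau>. (y2 has_real_derivative g \<mu>2 (x \<tau>) (y2 \<tau>)) (at \<tau>)" using H by blast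
    have cy1: "continuous_on UNIV y1" by (intro continuous_at_imp_continuous_on ballI DERIV_isCont[OF d1])
    have cy2: "continuous_on UNIV y2" by (intro continuous_at_imp_continuous_on ballI DERIV_isCont[OF d2])
    have cv1: "(x \<longlongrightarrow> xp) at_top" "(y1 \<longlongrightarrow> sp \<mu>1) at_top" using conv_top[OF cx cy1] H by blast+
    have cv2: "(y2 \<longlongrightarrow> sp \<mu>2) at_top" using conv_top[OF cx cy2] H by blast
    obtain G1 where G1: "continuous_on UNIV G1" "\<And>a b. ((\<lambda>b. g \<mu>1 a b) has_real_derivative G1 (a,b)) (at b)"
      using gy[OF m(1)] by blast
    obtain G2 where G2: "continuous_on UNIV G2" "\<And>a b. ((\<lambda>b. g \<mu>2 a b) has_real_derivative G2 (a,b)) (at b)"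
      using gy[OF m(2)] by blast
    have G1s: "G1 (xp, sp \<mu>1) > 0" using hyp_p[OF m(1)] DERIV_imp_deriv[OF G1(2)] by simp
    have G1n: "G1 (xp, np \<mu>1) < 0" using hyp_p[OF m(1)] DERIV_imp_deriv[OF G1(2)] by simp
    have G2s: "G2 (xp, sp \<mu>2) > 0" using hyp_p[OF m(2)] DERIV_imp_deriv[OF G2(2)] by simp
    have nG1: "\<And>a b. ((\<lambda>b. - g \<mu>1 a b) has_real_derivative - G1 (a,b)) (at b)"
      using G1(2) by (intro derivative_intros)
    have nG2: "\<And>a b. ((\<lambda>b. - g \<mu>2 a b) has_real_derivative - G2 (a,b)) (at b)"
      using G2(2) by (intro derivative_intros)
    have cnG2: "continuous_on UNIV (\<lambda>p. - G2 p)" using G2(1) by (intro continuous_intros)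
    have s12: "sp \<mu>1 \<le> sp \<mu>2"
    proof (rule zero_order[where \<phi>="\<lambda>y. - g \<mu>1 xp y" and \<psi>="\<lambda>y. - g \<mu>2 xp y" and a="sp \<mu>1" and b="np \<mu>1" and da="- G1 (xp, sp \<mu>1)" and db="- G1 (xp, np \<mu>1)"
          and s="sp \<mu>2" and ds="- G2 (xp, sp \<mu>2)"])
      show "\<And>y. - g \<mu>1 xp y \<le> - g \<mu>2 xp y" using gmono[OF m less_imp_le[OF lt]] xm_xp by simp
      show "\<And>y. - g \<mu>1 xp (y + 2 * pi) = - g \<mu>1 xp y" using g_periodic[OF m(1)] by simp
      show "\<And>y. (- g \<mu>1 xp y = 0) = ((\<exists>k::int. y = sp \<mu>1 + 2 * pi * k) \<or> (\<exists>k::int. y = np \<mu>1 + 2 * pi * k))"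
        using zeros_p[OF m(1)] by simp
      show "- pi \<le> sp \<mu>1" "sp \<mu>1 < np \<mu>1" "np \<mu>1 \<le> pi" using order_p[OF m(1)] by auto
      show "DERIV (\<lambda>y. - g \<mu>1 xp y) (sp \<mu>1) :> - G1 (xp, sp \<mu>1)" using nG1 by simp
      show "- G1 (xp, sp \<mu>1) < 0" using G1s by simp
      show "DERIV (\<lambda>y. - g \<mu>1 xp y) (np \<mu>1) :> - G1 (xp, np \<mu>1)" using nG1 by simp
      show "- G1 (xp, np \<mu>1) > 0" using G1n by simp
      show "\<And>y. isCont (\<lambda>y. - g \<mu>1 xp y) y" using nG1 DERIV_isCont by fastforce
      show "- g \<mu>2 xp (sp \<mu>2) = 0" using zeros_p[OF m(2), of "sp \<mu>2"] by (auto intro: exI[of _ 0])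
      show "DERIV (\<lambda>y. - g \<mu>2 xp y) (sp \<mu>2) :> - G2 (xp, sp \<mu>2)" using nG2 by simp
      show "- G2 (xp, sp \<mu>2) < 0" using G2s by simp
      show "- pi \<le> sp \<mu>2" using order_p[OF m(2)] by auto
    qed
    have "y1 (- (- t)) \<le> y2 (- (- t))"
    proof (rule core_back[of "\<lambda>a b. - g \<mu>1 a b" "\<lambda>t. x (- t)" "\<lambda>a b. - g \<mu>2 a b" "\<lambda>t. y2 (- t)" "\<lambda>t. y1 (- t)" xp "sp \<mu>2" "sp \<mu>1"])
      show "\<And>t y. - g \<mu>1 (x (- t)) y \<le> - g \<mu>2 (x (- t)) y"
        using gmono[OF m less_imp_le[OF lt]] x_range by (simp add: less_imp_le)
      show "\<And>R. \<exists>B. \<forall>t u v. \<bar>u\<bar> \<le> R \<longrightarrow> \<bar>v\<bar> \<le> R \<longrightarrow> \<bar>- g \<mu>2 (x (- t)) u - - g \<mu>2 (x (- t)) v\<bar> \<le> B * \<bar>u - v\<bar>"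
      proof -
        fix R
        obtain B where B: "\<forall>t u v. \<bar>u\<bar> \<le> R \<longrightarrow> \<bar>v\<bar> \<le> R \<longrightarrow> \<bar>g \<mu>2 (x t) u - g \<mu>2 (x t) v\<bar> \<le> B * \<bar>u - v\<bar>"
          using lipx[OF m(2)] by blast
        show "\<exists>B. \<forall>t u v. \<bar>u\<bar> \<le> R \<longrightarrow> \<bar>v\<bar> \<le> R \<longrightarrow> \<bar>- g \<mu>2 (x (- t)) u - - g \<mu>2 (x (- t)) v\<bar> \<le> B * \<bar>u - v\<bar>"
        proof (intro exI allI impI)
          fix t u v assume "\<bar>u\<bar> \<le> R" "\<bar>v\<bar> \<le> R"
          then have "\<bar>g \<mu>2 (x (-t)) u - g \<mu>2 (x (-t)) v\<bar> \<le> B * \<bar>u - v\<bar>" using B by blast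
          then show "\<bar>- g \<mu>2 (x (- t)) u - - g \<mu>2 (x (- t)) v\<bar> \<le> B * \<bar>u - v\<bar>" by (simp add: abs_minus_commute)
        qed
      qed
      show "\<And>t. ((\<lambda>t. y2 (- t)) has_real_derivative - g \<mu>2 (x (- t)) (y2 (- t))) (at t)"
        using d2 DERIV_mirror by blast
      show "\<And>t. ((\<lambda>t. y1 (- t)) has_real_derivative - g \<mu>1 (x (- t)) (y1 (- t))) (at t)"
        using d1 DERIV_mirror by blast
      show "((\<lambda>t. x (- t)) \<longlongrightarrow> xp) at_bot" using cv1(1) filterlim_at_bot_mirror[of "\<lambda>t. x (- t)"] by simp
      show "((\<lambda>t. y2 (- t)) \<longlongrightarrow> sp \<mu>2) at_bot" using cv2 filterlim_at_bot_mirror[of "\<lambda>t. y2 (- t)"] by simp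
      show "((\<lambda>t. y1 (- t)) \<longlongrightarrow> sp \<mu>1) at_bot" using cv1(2) filterlim_at_bot_mirror[of "\<lambda>t. y1 (- t)"] by simp
      show "sp \<mu>1 \<le> sp \<mu>2" by (fact s12)
      show "\<exists>\<delta>>0. \<forall>x' u v. \<bar>x' - xp\<bar> < \<delta> \<longrightarrow> \<bar>u - sp \<mu>2\<bar> < \<delta> \<longrightarrow> \<bar>v - sp \<mu>2\<bar> < \<delta> \<longrightarrow> u < v \<longrightarrow> - g \<mu>2 x' v < - g \<mu>2 x' u"
        by (rule locmono[OF cnG2 nG2]) (use G2s in simp)
    qed
    then show "y1 t \<le> y2 t" by simp
  qed
qed


end
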